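(* Let $(f_n)_{n\in\mathbb{N}}$ be a family of polynomials over $\mathbb{C}$, $f_n$ in $n$ variables, of degree at most $\mathrm{poly}(n)$, such that $f_n$ has a constant-free arithmetic circuit of size at most $\mathrm{poly}(n)$. Then $f_n$ has a constant-free almost-MD arithmetic circuit of size at most $\mathrm{poly}(n)$.
   Context: An arithmetic circuit has input nodes labeled by variables or constants and internal addition and multiplication gates (fan-in two for multiplication); size is the number of edges/gates. It is constant-free if its only constant inputs are $0,1,-1$. A gate $v$ is constant producing if every input node of the subcircuit rooted at $v$ is a field constant. A circuit is almost-MD if every multiplication gate either multiplies two disjoint subcircuits or has at least one child that is constant producing. *)

theory Defs
  imports Complex_Main "HOL-Library.Poly_Mapping"
begin

text \<open>Multivariate polynomials over the complex numbers in variables x_0, x_1, ...: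
  finitely supported maps from monomials (exponent vectors, nat =>0 nat) to coefficients.
  Multiplication is the convolution product provided by Poly_Mapping.\<close>
type_synonym mpoly = "(nat \<Rightarrow>\<^sub>0 nat) \<Rightarrow>\<^sub>0 complex"

definition mvar :: "nat \<Rightarrow> mpoly" where
  "mvar i = Poly_Mapping.single (Poly_Mapping.single i 1) 1"

definition mconst :: "complex \<Rightarrow> mpoly" where
  "mconst c = Poly_Mapping.single 0 c"

definition mon_deg :: "(nat \<Rightarrow>\<^sub>0 nat) \<Rightarrow> nat" where
  "mon_deg m = (\<Sum>i\<in>Poly_Mapping.keys m. Poly_Mapping.lookup m i)"

text \<open>Total degree (the zero polynomial gets degree 0).\<close>
definition total_deg :: "mpoly \<Rightarrow> nat" where
  "total_deg p = Max (insert 0 (mon_deg ` Poly_Mapping.keys p))"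

definition vars_in :: "nat \<Rightarrow> mpoly \<Rightarrow> bool" where
  "vars_in n p \<longleftrightarrow> (\<forall>m\<in>Poly_Mapping.keys p. Poly_Mapping.keys m \<subseteq> {..<n})"

text \<open>Arithmetic circuits as DAGs in topological order: a list of gates, where gate number i
  may only refer to gates with smaller numbers.\<close>
datatype gate = Inp nat | Cst complex | AddG "nat list" | MulG nat nat

type_synonym circuit = "gate list"

fun children :: "gate \<Rightarrow> nat list" where
  "children (Inp _) = []"
| "children (Cst _) = []"
| "children (AddG js) = js"
| "children (MulG j k) = [j, k]"

definition wf_circuit :: "nat \<Rightarrow> circuit \<Rightarrow> bool" where
  "wf_circuit n C \<longleftrightarrow> C \<noteq> [] \<and>
     (\<forall>i<length C. (\<forall>j\<in>set (children (C ! i)). j < i)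
        \<and> (\<forall>js. C ! i = AddG js \<longrightarrow> js \<noteq> [])
        \<and> (\<forall>v. C ! i = Inp v \<longrightarrow> v < n))"

fun gate_val :: "mpoly list \<Rightarrow> gate \<Rightarrow> mpoly" where
  "gate_val vs (Inp v) = mvar v"
| "gate_val vs (Cst c) = mconst c"
| "gate_val vs (AddG js) = sum_list (map (\<lambda>j. vs ! j) js)"
| "gate_val vs (MulG j k) = (vs ! j) * (vs ! k)"

definition circ_vals :: "circuit \<Rightarrow> mpoly list" where
  "circ_vals C = foldl (\<lambda>vs g. vs @ [gate_val vs g]) [] C"

definition computes :: "circuit \<Rightarrow> mpoly \<Rightarrow> bool" where
  "computes C f \<longleftrightarrow> last (circ_vals C) = f"

definition circ_size :: "circuit \<Rightarrow> nat" where
  "circ_size C = length C + (\<Sum>g\<leftarrow>C. length (children g))"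

definition constant_free :: "circuit \<Rightarrow> bool" where
  "constant_free C \<longleftrightarrow> (\<forall>g\<in>set C. \<forall>c. g = Cst c \<longrightarrow> c \<in> {0, 1, -1})"

inductive_set subcirc :: "circuit \<Rightarrow> nat \<Rightarrow> nat set" for C v where
  root: "v \<in> subcirc C v"
| step: "u \<in> subcirc C v \<Longrightarrow> u < length C \<Longrightarrow> j \<in> set (children (C ! u)) \<Longrightarrow> j \<in> subcirc C v"

definition const_producing :: "circuit \<Rightarrow> nat \<Rightarrow> bool" where
  "const_producing C v \<longleftrightarrow> (\<forall>u\<in>subcirc C v. \<forall>x. C ! u \<noteq> Inp x)"

definition almost_MD :: "circuit \<Rightarrow> bool" where
  "almost_MD C \<longleftrightarrow> (\<forall>i<length C. \<forall>j k. C ! i = MulG j k \<longrightarrow>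
      subcirc C j \<inter> subcirc C k = {} \<or> const_producing C j \<or> const_producing C k)"

definition poly_bounded :: "(nat \<Rightarrow> nat) \<Rightarrow> bool" where
  "poly_bounded g \<longleftrightarrow> (\<exists>c. \<forall>n. g n \<le> c * n ^ c + c)"

end

theory Submission
  imports Defs
begin

definition hc :: "nat \<Rightarrow> mpoly \<Rightarrow> mpoly" where
  "hc k p = Poly_Mapping.mapp (\<lambda>m c. if mon_deg m = k then c else 0) p"

lemma lookup_hc: "Poly_Mapping.lookup (hc k p) m = (if mon_deg m = k then Poly_Mapping.lookup p m else 0)"
  by (auto simp: hc_def lookup_mapp when_def in_keys_iff)

lemma hc_add: "hc k (p + q) = hc k p + hc k q"
  by (rule poly_mapping_eqI) (simp add: lookup_hc lookup_add)

lemma hc_zero [simp]: "hc k 0 = 0"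
  by (rule poly_mapping_eqI) (simp add: lookup_hc)

lemma hc_sum: "hc k (sum F A) = (\<Sum>a\<in>A. hc k (F a))"
  by (rule poly_mapping_eqI) (simp add: lookup_hc lookup_sum)

lemma hc_sum_list: "hc k (sum_list (map F xs)) = sum_list (map (\<lambda>x. hc k (F x)) xs)"
  by (induction xs) (simp_all add: hc_add)

lemma mon_deg_eq: "finite S \<Longrightarrow> Poly_Mapping.keys m \<subseteq> S \<Longrightarrow> mon_deg m = sum (Poly_Mapping.lookup m) S"
  unfolding mon_deg_def by (rule sum.mono_neutral_left) (auto simp: in_keys_iff)

lemma mon_deg_add: "mon_deg (a + b) = mon_deg a + mon_deg b"
proof -
  let ?S = "Poly_Mapping.keys a \<union> Poly_Mapping.keys b"
  have f: "finite ?S" by simp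
  have "mon_deg (a + b) = sum (Poly_Mapping.lookup (a+b)) ?S"
    using keys_add[of a b] by (intro mon_deg_eq f) auto
  also have "\<dots> = sum (Poly_Mapping.lookup a) ?S + sum (Poly_Mapping.lookup b) ?S"
    by (simp add: lookup_add sum.distrib)
  also have "\<dots> = mon_deg a + mon_deg b"
    by (subst (1 2) mon_deg_eq[OF f]) auto
  finally show ?thesis .
qed

lemma hc_homog: "(\<forall>m\<in>Poly_Mapping.keys p. mon_deg m = e) \<Longrightarrow> hc k p = (if k = e then p else 0)"
  by (rule poly_mapping_eqI) (auto simp: lookup_hc in_keys_iff)

lemma keys_hc_deg: "m \<in> Poly_Mapping.keys (hc i p) \<Longrightarrow> mon_deg m = i"
  by (auto simp: in_keys_iff lookup_hc split: if_splits)

lemma hc_hc_mult: "hc k (hc i p * hc j q) = (if k = i + j then hc i p * hc j q else 0)"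
proof (rule hc_homog, rule ballI)
  fix m assume "m \<in> Poly_Mapping.keys (hc i p * hc j q)"
  then obtain a b where "m = a + b" "a \<in> Poly_Mapping.keys (hc i p)" "b \<in> Poly_Mapping.keys (hc j q)"
    using keys_mult by blast
  then show "mon_deg m = i + j" by (simp add: mon_deg_add keys_hc_deg)
qed

lemma mon_deg_le_total: "m \<in> Poly_Mapping.keys p \<Longrightarrow> mon_deg m \<le> total_deg p"
  unfolding total_deg_def by (auto intro: Max_ge)

lemma hc_decomp: "total_deg p \<le> N \<Longrightarrow> p = (\<Sum>i\<le>N. hc i p)"
proof (rule poly_mapping_eqI)
  fix m assume a: "total_deg p \<le> N"
  have "Poly_Mapping.lookup (\<Sum>i\<le>N. hc i p) m = (if mon_deg m \<le> N then Poly_Mapping.lookup p m else 0)"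
    by (simp add: lookup_sum lookup_hc sum.delta')
  also have "\<dots> = Poly_Mapping.lookup p m"
    using mon_deg_le_total[of m p] a by (cases "Poly_Mapping.lookup p m = 0") (auto simp: in_keys_iff)
  finally show "Poly_Mapping.lookup p m = Poly_Mapping.lookup (\<Sum>i\<le>N. hc i p) m" by simp
qed

lemma sum_delta_aux: "(k::nat) \<le> N \<Longrightarrow> (\<Sum>j\<le>N. if k = i + j then X j else 0) = (if i \<le> k then X (k - i) else (0::mpoly))"
proof -
  assume k: "k \<le> N"
  have "(\<Sum>j\<le>N. if k = i + j then X j else 0) = (\<Sum>j\<le>N. if j = k - i \<and> i \<le> k then X j else 0)"
  proof -
    have "(k = i + j) = (j = k - i \<and> i \<le> k)" for j by arith
    then show ?thesis by simp
  qed
  also have "\<dots> = (if i \<le> k then X (k - i) else 0)"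
    using k by (cases "i \<le> k") (auto simp: sum.delta)
  finally show ?thesis .
qed

lemma hc_mult: "hc k (p * q) = (\<Sum>i\<le>k. hc i p * hc (k - i) q)"
proof -
  define N where "N = total_deg p + total_deg q + k"
  have "p * q = (\<Sum>i\<le>N. hc i p) * (\<Sum>j\<le>N. hc j q)"
    using hc_decomp[of p N] hc_decomp[of q N] unfolding N_def by simp
  also have "\<dots> = (\<Sum>i\<le>N. \<Sum>j\<le>N. hc i p * hc j q)"
    by (simp add: sum_product)
  finally have "hc k (p * q) = (\<Sum>i\<le>N. \<Sum>j\<le>N. if k = i + j then hc i p * hc j q else 0)"
    by (simp add: hc_sum hc_hc_mult)
  also have "\<dots> = (\<Sum>i\<le>N. if i \<le> k then hc i p * hc (k - i) q else 0)"
    by (rule sum.cong[OF refl], subst sum_delta_aux) (auto simp: N_def)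
  also have "\<dots> = (\<Sum>i\<in>{..N} \<inter> {x. x \<le> k}. hc i p * hc (k - i) q)"
    by (simp add: sum.If_cases)
  also have "{..N} \<inter> {x. x \<le> k} = {..k}" by (auto simp: N_def)
  finally show ?thesis .
qed

lemma hc_mvar: "hc k (mvar x) = (if k = 1 then mvar x else 0)"
  unfolding mvar_def by (rule hc_homog) (simp add: mon_deg_def)

lemma hc_mconst: "hc k (mconst c) = (if k = 0 then mconst c else 0)"
  unfolding mconst_def by (rule hc_homog) (simp add: mon_deg_def)

lemma mconst_0 [simp]: "mconst 0 = 0"
  by (simp add: mconst_def)

lemma circ_vals_snoc: "circ_vals (C @ [g]) = circ_vals C @ [gate_val (circ_vals C) g]"
  by (simp add: circ_vals_def)

lemma circ_vals_Nil [simp]: "circ_vals [] = []"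
  by (simp add: circ_vals_def)

lemma length_circ_vals [simp]: "length (circ_vals C) = length C"
  by (induction C rule: rev_induct) (simp_all add: circ_vals_snoc)

lemma circ_vals_take: "i \<le> length C \<Longrightarrow> take i (circ_vals C) = circ_vals (take i C)"
proof (induction C arbitrary: i rule: rev_induct)
  case Nil then show ?case by simp
next
  case (snoc x xs)
  show ?case
  proof (cases "i \<le> length xs")
    case True then show ?thesis using snoc by (simp add: circ_vals_snoc)
  next
    case False then have "i = length xs + 1" using snoc.prems by simp
    then show ?thesis by (simp add: circ_vals_snoc)
  qed
qed

lemma circ_vals_nth: "i < length C \<Longrightarrow> circ_vals C ! i = gate_val (circ_vals (take i C)) (C ! i)"
proof -
  assume i: "i < length C"
  have "circ_vals C ! i = take (Suc i) (circ_vals C) ! i" by simp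
  also have "\<dots> = circ_vals (take (Suc i) C) ! i" using i by (simp add: circ_vals_take)
  also have "take (Suc i) C = take i C @ [C ! i]" using i by (simp add: take_Suc_conv_app_nth)
  also have "circ_vals (take i C @ [C ! i]) ! i = gate_val (circ_vals (take i C)) (C ! i)"
    using i by (simp add: circ_vals_snoc nth_append)
  finally show ?thesis .
qed

lemma gate_val_take: "(\<forall>j\<in>set (children g). j < i) \<Longrightarrow> i \<le> length vs \<Longrightarrow> gate_val (take i vs) g = gate_val vs g"
  by (cases g) (auto intro!: arg_cong[where f=sum_list] map_cong)

lemma eval_nth: "(\<forall>i<length C. \<forall>j\<in>set (children (C ! i)). j < i) \<Longrightarrow> i < length C \<Longrightarrow>
    circ_vals C ! i = gate_val (circ_vals C) (C ! i)"
  by (simp add: circ_vals_nth circ_vals_take[symmetric] gate_val_take)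


lemma enc_less: "(x::nat) < D \<Longrightarrow> y < y' \<Longrightarrow> y * D + x < y' * D + x'"
proof -
  assume "x < D" "y < y'"
  then have "y * D + x < (y + 1) * D" by simp
  also have "\<dots> \<le> y' * D" using \<open>y < y'\<close> by (intro mult_le_mono1) simp
  finally show ?thesis by simp
qed

locale cons =
  fixes C :: circuit and D :: nat
  assumes ord: "\<forall>i<length C. \<forall>j\<in>set (children (C ! i)). j < i"
    and Dpos: "0 < D" and Cne: "C \<noteq> []"
begin

definition T :: nat where "T = D + 3"
definition idx :: "nat \<Rightarrow> nat \<Rightarrow> nat \<Rightarrow> nat \<Rightarrow> nat" where
  "idx g a b t = ((g * D + a) * D + b) * T + t"
definition dt :: "nat \<Rightarrow> nat" where "dt i = i mod T"
definition db :: "nat \<Rightarrow> nat" where "db i = i div T mod D"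
definition da :: "nat \<Rightarrow> nat" where "da i = i div T div D mod D"
definition dg :: "nat \<Rightarrow> nat" where "dg i = i div T div D div D"
definition N :: nat where "N = length C * D * D * T"

lemma Tpos: "0 < T" by (simp add: T_def)

lemma dec_idx [simp]:
  assumes "a < D" "b < D" "t < T"
  shows "dt (idx g a b t) = t" "db (idx g a b t) = b" "da (idx g a b t) = a" "dg (idx g a b t) = g"
  using assms Tpos by (simp_all add: dt_def db_def da_def dg_def idx_def)

lemma idx_dec: "idx (dg i) (da i) (db i) (dt i) = i"
  unfolding idx_def dg_def da_def db_def dt_def
  by (metis div_mult_mod_eq)

lemma dec_bounds: "dt i < T" "db i < D" "da i < D" "i < N \<Longrightarrow> dg i < length C"
  using Tpos Dpos by (auto simp: dt_def db_def da_def dg_def N_def less_mult_imp_div_less mult.assoc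
      div_less_iff_less_mult div_mult2_eq[symmetric] mult.commute[of T])

lemma idx_less_N: "g < length C \<Longrightarrow> a < D \<Longrightarrow> b < D \<Longrightarrow> t < T \<Longrightarrow> idx g a b t < N"
proof -
  assume as: "g < length C" "a < D" "b < D" "t < T"
  have "g * D + a < length C * D + 0" using as by (intro enc_less) auto
  then have "(g * D + a) * D + b < (length C * D) * D + 0" using as by (intro enc_less) auto
  then have "((g * D + a) * D + b) * T + t < (length C * D * D) * T + 0" using as by (intro enc_less) auto
  then show ?thesis by (simp add: idx_def N_def)
qed

lemma idx_less_g: "h < g \<Longrightarrow> a' < D \<Longrightarrow> b' < D \<Longrightarrow> t' < T \<Longrightarrow> idx h a' b' t' < idx g a b t"
proof -
  assume as: "h < g" "a' < D" "b' < D" "t' < T"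
  have "h * D + a' < g * D + a" using as by (intro enc_less) auto
  then have "(h * D + a') * D + b' < (g * D + a) * D + b" using as by (intro enc_less) auto
  then have "((h * D + a') * D + b') * T + t' < ((g * D + a) * D + b) * T + t" using as by (intro enc_less) auto
  then show ?thesis by (simp add: idx_def)
qed

lemma idx_less_t: "t' < t \<Longrightarrow> idx g a b t' < idx g a b t"
  by (simp add: idx_def)

definition node :: "nat \<Rightarrow> nat \<Rightarrow> nat \<Rightarrow> nat \<Rightarrow> gate" where
  "node g a b t =
   (if t = 0 then
      (case C ! g of Inp x \<Rightarrow> Cst 0 | Cst c \<Rightarrow> Cst c
        | AddG js \<Rightarrow> AddG (map (\<lambda>h. idx h a b 0) js)
        | MulG h1 h2 \<Rightarrow> MulG (idx h1 a b 0) (idx h2 a b 0))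
    else if b < a then Cst 0
    else if t = T - 1 then
      (case C ! g of Inp x \<Rightarrow> if a = b then Inp x else Cst 0 | Cst c \<Rightarrow> Cst 0
        | AddG js \<Rightarrow> AddG (map (\<lambda>h. idx h a b (T - 1)) js)
        | MulG h1 h2 \<Rightarrow> AddG (map (\<lambda>i. idx g a b (Suc i)) [0..<Suc (Suc (b - a))]))
    else (case C ! g of MulG h1 h2 \<Rightarrow>
          (if t - 1 = 0 then MulG (idx h1 a b 0) (idx h2 a b (T - 1))
           else if t - 1 = Suc (b - a) then MulG (idx h1 a b (T - 1)) (idx h2 a b 0)
           else if t - 1 < Suc (b - a) then MulG (idx h1 a (a + (t - 1) - 1) (T - 1)) (idx h2 (a + (t - 1)) b (T - 1))
           else Cst 0)
        | _ \<Rightarrow> Cst 0))"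

definition outg :: gate where
  "outg = AddG (map (\<lambda>k. if k = 0 then idx (length C - 1) 0 0 0 else idx (length C - 1) 0 (k - 1) (T - 1)) [0..<D])"

definition C' :: circuit where
  "C' = map (\<lambda>i. node (dg i) (da i) (db i) (dt i)) [0..<N] @ [outg]"

lemma length_C' [simp]: "length C' = Suc N" by (simp add: C'_def)

lemma C'_nth: "i < N \<Longrightarrow> C' ! i = node (dg i) (da i) (db i) (dt i)"
  by (simp add: C'_def nth_append)

lemma C'_N: "C' ! N = outg"
  by (simp add: C'_def nth_append)

lemma ord_g: "g < length C \<Longrightarrow> h \<in> set (children (C ! g)) \<Longrightarrow> h < g"
  using ord by blast

lemma children_node:
  assumes g: "g < length C" and ab: "a < D" "b < D" and t: "t < T"
    and j: "j \<in> set (children (node g a b t))"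
  shows "j < idx g a b t \<and> j < N \<and> (a \<le> b \<longrightarrow> a \<le> da j \<and> db j \<le> b \<and> da j \<le> db j)
     \<and> (t = 0 \<longrightarrow> dt j = 0)"
proof -
  have hl: "h < g" "h < length C" if "h \<in> set (children (C ! g))" for h
    using ord_g[OF g that] g by auto
  have T1: "T - 1 < T" "0 < T" using Tpos by auto
  show ?thesis
  proof (cases "C ! g")
    case (Inp x)
    then show ?thesis using j by (auto simp: node_def split: if_splits)
  next
    case (Cst c)
    then show ?thesis using j by (auto simp: node_def split: if_splits)
  next
    case (AddG js)
    then have "h \<in> set js \<Longrightarrow> h < g \<and> h < length C" for h using hl by auto
    then show ?thesis using j AddG ab t T1
      by (auto simp: node_def idx_less_g idx_less_N split: if_splits)
  next
    case (MulG h1 h2)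
    then have h: "h1 < g" "h2 < g" "h1 < length C" "h2 < length C" using hl by auto
    show ?thesis
    proof (cases "t = 0")
      case True then show ?thesis using j MulG ab h T1
        by (auto simp: node_def idx_less_g idx_less_N)
    next
      case False
      show ?thesis
      proof (cases "b < a")
        case True then show ?thesis using j MulG False by (auto simp: node_def)
      next
        case ba: False
        show ?thesis
        proof (cases "t = T - 1")
          case True
          then obtain i where i: "j = idx g a b (Suc i)" "i < Suc (Suc (b - a))"
            using j MulG False ba by (auto simp: node_def)
          have "Suc i < T - 1" using i ab by (simp add: T_def)
          then show ?thesis using i ab T1 g True False ba
            by (auto simp: idx_less_t idx_less_N)
        next
          case tn: False
          have "j = idx h1 a b 0 \<or> j = idx h2 a b (T - 1) \<or> j = idx h1 a b (T - 1) \<or> j = idx h2 a b 0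
             \<or> (t - 1 < Suc (b - a) \<and> 0 < t - 1 \<and> (j = idx h1 a (a + (t - 1) - 1) (T - 1) \<or> j = idx h2 (a + (t - 1)) b (T - 1)))"
            using j MulG False ba tn by (auto simp: node_def split: if_splits)
          then show ?thesis using h ab T1 False ba
            by (elim disjE) (auto simp: idx_less_g idx_less_N)
        qed
      qed
    qed
  qed
qed


lemma ord_C': "\<forall>i<length C'. \<forall>j\<in>set (children (C' ! i)). j < i"
proof (intro allI impI ballI)
  fix i j assume i: "i < length C'" and j: "j \<in> set (children (C' ! i))"
  show "j < i"
  proof (cases "i < N")
    case True
    then show ?thesis using j children_node[of "dg i" "da i" "db i" "dt i" j] dec_bounds[of i]
      by (simp add: C'_nth idx_dec)
  next
    case False
    then have "i = N" using i by simp
    moreover have "j < N" using j Dpos Cne Tpos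
      by (auto simp: \<open>i = N\<close> C'_N outg_def intro!: idx_less_N)
    ultimately show ?thesis by simp
  qed
qed

abbreviation "vs \<equiv> circ_vals C"
abbreviation "ws \<equiv> circ_vals C'"

lemma ws_node: "g < length C \<Longrightarrow> a < D \<Longrightarrow> b < D \<Longrightarrow> t < T \<Longrightarrow> ws ! idx g a b t = gate_val ws (node g a b t)"
  using eval_nth[OF ord_C', of "idx g a b t"] idx_less_N[of g a b t] by (simp add: C'_nth)

lemma vs_nth: "g < length C \<Longrightarrow> vs ! g = gate_val vs (C ! g)"
  using eval_nth[OF ord] by simp

lemma sum_list_upt_atMost: "sum_list (map (f :: nat \<Rightarrow> 'a::comm_monoid_add) [0..<Suc k]) = (\<Sum>i\<le>k. f i)"
proof (induction k)
  case (Suc k)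
  have "sum_list (map f [0..<Suc (Suc k)]) = sum_list (map f [0..<Suc k]) + f (Suc k)" by (simp add: add.assoc)
  then show ?case using Suc by simp
qed simp

lemma vals: "g < length C \<Longrightarrow> (\<forall>a b. a < D \<longrightarrow> b < D \<longrightarrow> ws ! idx g a b 0 = hc 0 (vs ! g)) \<and>
   (\<forall>a b. a \<le> b \<longrightarrow> b < D \<longrightarrow> ws ! idx g a b (T - 1) = hc (Suc (b - a)) (vs ! g))"
proof (induction g rule: less_induct)
  case (less g)
  have hl: "h < g" "h < length C" if "h \<in> set (children (C ! g))" for h
    using ord_g[OF less.prems that] less.prems by auto
  have T1: "T - 1 < T" "0 < T" "T - 1 \<noteq> 0" using Tpos by (auto simp: T_def)
  show ?case
  proof (cases "C ! g")
    case (Inp x)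
    then show ?thesis using less.prems T1
      by (auto simp: ws_node vs_nth node_def hc_mvar)
  next
    case (Cst c)
    then show ?thesis using less.prems T1
      by (auto simp: ws_node vs_nth node_def hc_mconst)
  next
    case (AddG js)
    then have IH: "h \<in> set js \<Longrightarrow> h < length C \<and> (\<forall>a b. a < D \<longrightarrow> b < D \<longrightarrow> ws ! idx h a b 0 = hc 0 (vs ! h)) \<and>
      (\<forall>a b. a \<le> b \<longrightarrow> b < D \<longrightarrow> ws ! idx h a b (T - 1) = hc (Suc (b - a)) (vs ! h))" for h
      using hl less.IH by auto
    show ?thesis
    proof (intro conjI allI impI)
      fix a b assume ab: "a < D" "b < D"
      have "ws ! idx g a b 0 = sum_list (map (\<lambda>h. ws ! idx h a b 0) js)"
        using less.prems ab T1 AddG by (simp add: ws_node node_def comp_def)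
      also have "\<dots> = sum_list (map (\<lambda>h. hc 0 (vs ! h)) js)"
        using IH ab by (intro arg_cong[where f=sum_list] map_cong) auto
      also have "\<dots> = hc 0 (vs ! g)"
        using less.prems AddG by (simp add: vs_nth hc_sum_list)
      finally show "ws ! idx g a b 0 = hc 0 (vs ! g)" .
    next
      fix a b assume ab: "a \<le> b" "b < D"
      have "ws ! idx g a b (T - 1) = sum_list (map (\<lambda>h. ws ! idx h a b (T - 1)) js)"
        using less.prems ab T1 AddG by (simp add: ws_node node_def comp_def)
      also have "\<dots> = sum_list (map (\<lambda>h. hc (Suc (b - a)) (vs ! h)) js)"
        using IH ab by (intro arg_cong[where f=sum_list] map_cong) auto
      also have "\<dots> = hc (Suc (b - a)) (vs ! g)"
        using less.prems AddG by (simp add: vs_nth hc_sum_list)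
      finally show "ws ! idx g a b (T - 1) = hc (Suc (b - a)) (vs ! g)" .
    qed
  next
    case (MulG h1 h2)
    then have h: "h1 < g" "h2 < g" "h1 < length C" "h2 < length C" using hl by auto
    define p where "p = vs ! h1"
    define q where "q = vs ! h2"
    have IH1: "a < D \<Longrightarrow> b < D \<Longrightarrow> ws ! idx h1 a b 0 = hc 0 p"
      "a \<le> b \<Longrightarrow> b < D \<Longrightarrow> ws ! idx h1 a b (T - 1) = hc (Suc (b - a)) p" for a b
      using less.IH[OF h(1)] h unfolding p_def by auto
    have IH2: "a < D \<Longrightarrow> b < D \<Longrightarrow> ws ! idx h2 a b 0 = hc 0 q"
      "a \<le> b \<Longrightarrow> b < D \<Longrightarrow> ws ! idx h2 a b (T - 1) = hc (Suc (b - a)) q" for a b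
      using less.IH[OF h(2)] h unfolding q_def by auto
    have vg: "vs ! g = p * q" using less.prems MulG by (simp add: vs_nth p_def q_def)
    show ?thesis
    proof (intro conjI allI impI)
      fix a b assume ab: "a < D" "b < D"
      show "ws ! idx g a b 0 = hc 0 (vs ! g)"
        using less.prems ab T1 MulG IH1 IH2 by (simp add: ws_node node_def vg hc_mult)
    next
      fix a b assume ab: "a \<le> b" "b < D"
      define k where "k = Suc (b - a)"
      have prod: "ws ! idx g a b (Suc i) = hc i p * hc (k - i) q" if i: "i \<le> k" for i
      proof -
        have "Suc i < T" "Suc i \<noteq> T - 1" using i ab by (auto simp: T_def k_def)
        then have e: "ws ! idx g a b (Suc i) = gate_val ws (node g a b (Suc i))"
          using less.prems ab by (simp add: ws_node)
        show ?thesis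
        proof (cases "i = 0")
          case True then show ?thesis using e \<open>Suc i \<noteq> T - 1\<close> MulG ab IH1 IH2
            by (simp add: node_def k_def)
        next
          case False
          show ?thesis
          proof (cases "i = k")
            case True then show ?thesis using e \<open>Suc i \<noteq> T - 1\<close> MulG ab IH1 IH2 False
              by (simp add: node_def k_def)
          next
            case ik: False
            then have ik': "i < k" using i by simp
            have "ws ! idx g a b (Suc i) = ws ! idx h1 a (a + i - 1) (T - 1) * ws ! idx h2 (a + i) b (T - 1)"
              using e \<open>Suc i \<noteq> T - 1\<close> MulG ab False ik ik' by (simp add: node_def k_def)
            also have "\<dots> = hc i p * hc (k - i) q"
              using IH1(2)[of a "a + i - 1"] IH2(2)[of "a + i" b] ab False ik' unfolding k_def
              by (simp add: Suc_diff_le)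
            finally show ?thesis .
          qed
        qed
      qed
      have "ws ! idx g a b (T - 1) = sum_list (map (\<lambda>i. ws ! idx g a b (Suc i)) [0..<Suc k])"
        using less.prems ab T1 MulG by (simp add: ws_node node_def k_def comp_def)
      also have "\<dots> = (\<Sum>i\<le>k. ws ! idx g a b (Suc i))" by (rule sum_list_upt_atMost)
      also have "\<dots> = (\<Sum>i\<le>k. hc i p * hc (k - i) q)" by (rule sum.cong) (auto simp: prod)
      also have "\<dots> = hc k (vs ! g)" by (simp add: vg hc_mult)
      finally show "ws ! idx g a b (T - 1) = hc (Suc (b - a)) (vs ! g)" by (simp add: k_def)
    qed
  qed
qed


lemma out_val: "total_deg (vs ! (length C - 1)) < D \<Longrightarrow> last ws = vs ! (length C - 1)"
proof -
  assume d: "total_deg (vs ! (length C - 1)) < D"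
  define f0 where "f0 = vs ! (length C - 1)"
  have L: "length C - 1 < length C" using Cne by simp
  have T1: "T - 1 < T" "0 < T" using Tpos by auto
  have "ws \<noteq> []" by (metis length_circ_vals length_C' list.size(3) nat.distinct(1))
  then have "last ws = ws ! N" by (simp add: last_conv_nth)
  also have "\<dots> = gate_val ws outg" using eval_nth[OF ord_C', of N] by (simp add: C'_N)
  also have "\<dots> = sum_list (map (\<lambda>k. hc k f0) [0..<D])"
    unfolding outg_def using vals[OF L] Dpos T1 by (auto simp: f0_def intro!: arg_cong[where f=sum_list] map_cong)
  also have "[0..<D] = [0..<Suc (D - 1)]" using Dpos by simp
  also have "sum_list (map (\<lambda>k. hc k f0) [0..<Suc (D - 1)]) = (\<Sum>k\<le>D - 1. hc k f0)"
    by (rule sum_list_upt_atMost)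
  also have "\<dots> = f0" using hc_decomp[of f0 "D - 1"] d by (simp add: f0_def)
  finally show ?thesis by (simp add: f0_def)
qed

lemma node_in_range: "i < N \<Longrightarrow> C' ! i = node (dg i) (da i) (db i) (dt i) \<and> dg i < length C \<and> da i < D \<and> db i < D \<and> dt i < T"
  using dec_bounds[of i] by (simp add: C'_nth)

lemma node_AddG: "g < length C \<Longrightarrow> (\<forall>js. C ! g = AddG js \<longrightarrow> js \<noteq> []) \<Longrightarrow> node g a b t = AddG js \<Longrightarrow> js \<noteq> []"
  by (cases "C ! g") (auto simp: node_def split: if_splits)

lemma node_Inp: "node g a b t = Inp v \<Longrightarrow> C ! g = Inp v"
  by (cases "C ! g") (auto simp: node_def split: if_splits)

lemma node_Cst: "node g a b t = Cst c \<Longrightarrow> c = 0 \<or> C ! g = Cst c"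
  by (cases "C ! g") (auto simp: node_def split: if_splits)

lemma node_K_not_Inp: "node g a b 0 \<noteq> Inp v"
  by (cases "C ! g") (auto simp: node_def)

lemma wf_C': "wf_circuit n C \<Longrightarrow> wf_circuit n C'"
  unfolding wf_circuit_def
proof (intro conjI allI impI ballI)
  assume w: "C \<noteq> [] \<and> (\<forall>i<length C. (\<forall>j\<in>set (children (C ! i)). j < i) \<and> (\<forall>js. C ! i = AddG js \<longrightarrow> js \<noteq> []) \<and> (\<forall>v. C ! i = Inp v \<longrightarrow> v < n))"
  show "C' \<noteq> []" by (simp add: C'_def)
  fix i assume i: "i < length C'"
  { fix j assume "j \<in> set (children (C' ! i))" then show "j < i" using ord_C' i by blast }
  { fix js assume a: "C' ! i = AddG js"
    show "js \<noteq> []"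
    proof (cases "i < N")
      case True then show ?thesis using a node_in_range[of i] w node_AddG[of "dg i"] by metis
    next
      case False then have "i = N" using i by simp
      then show ?thesis using a Dpos by (auto simp: C'_N outg_def)
    qed }
  { fix v assume a: "C' ! i = Inp v"
    show "v < n"
    proof (cases "i < N")
      case True then show ?thesis using a node_in_range[of i] w node_Inp by metis
    next
      case False then have "i = N" using i by simp
      then show ?thesis using a by (auto simp: C'_N outg_def)
    qed }
qed

lemma cf_C': "constant_free C \<Longrightarrow> constant_free C'"
  unfolding constant_free_def
proof (intro ballI allI impI)
  assume cf: "\<forall>g\<in>set C. \<forall>c. g = Cst c \<longrightarrow> c \<in> {0, 1, - 1}"
  fix x c assume x: "x \<in> set C'" and xc: "x = Cst c"
  then obtain i where i: "i < length C'" "C' ! i = x" by (auto simp: in_set_conv_nth)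
  show "c \<in> {0, 1, - 1}"
  proof (cases "i < N")
    case True
    then have "c = 0 \<or> C ! dg i = Cst c" using node_in_range[of i] i xc node_Cst by metis
    moreover have "C ! dg i \<in> set C" using node_in_range[of i] True by simp
    ultimately show ?thesis using cf by auto
  next
    case False then have "i = N" using i by simp
    then show ?thesis using i xc by (auto simp: C'_N outg_def)
  qed
qed

lemma sub_tag: "u \<in> subcirc C' v \<Longrightarrow> v < N \<Longrightarrow> da v \<le> db v \<Longrightarrow> u < N \<and> da v \<le> da u \<and> db u \<le> db v \<and> da u \<le> db u"
proof (induction rule: subcirc.induct)
  case root then show ?case by simp
next
  case (step u j)
  then have u: "u < N" "da v \<le> da u" "db u \<le> db v" "da u \<le> db u" by auto
  have "j \<in> set (children (node (dg u) (da u) (db u) (dt u)))" using step node_in_range[of u] u by simp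
  then show ?case using children_node[of "dg u" "da u" "db u" "dt u" j] node_in_range[of u] u by auto
qed

lemma sub_K: "u \<in> subcirc C' v \<Longrightarrow> v < N \<Longrightarrow> dt v = 0 \<Longrightarrow> u < N \<and> dt u = 0"
proof (induction rule: subcirc.induct)
  case root then show ?case by simp
next
  case (step u j)
  then have u: "u < N" "dt u = 0" by auto
  have "j \<in> set (children (node (dg u) (da u) (db u) (dt u)))" using step node_in_range[of u] u by simp
  then show ?case using children_node[of "dg u" "da u" "db u" "dt u" j] node_in_range[of u] u by auto
qed

lemma cp_K: "v < N \<Longrightarrow> dt v = 0 \<Longrightarrow> const_producing C' v"
  unfolding const_producing_def
proof (intro ballI allI)
  fix u x assume "v < N" "dt v = 0" "u \<in> subcirc C' v"
  then have "u < N" "dt u = 0" using sub_K by blast+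
  then show "C' ! u \<noteq> Inp x" using node_in_range[of u] node_K_not_Inp by metis
qed

lemma mul_node:
  assumes g: "g < length C" and ab: "a < D" "b < D" and t: "t < T"
    and m: "node g a b t = MulG j k"
  shows "(j < N \<and> dt j = 0) \<or> (k < N \<and> dt k = 0) \<or> (j < N \<and> k < N \<and> da j \<le> db j \<and> da k \<le> db k \<and> db j < da k)"
proof -
  have jk: "j < N" "k < N" using children_node[OF g ab t, of j] children_node[OF g ab t, of k] m by auto
  have T1: "T - 1 < T" "0 < T" using Tpos by auto
  show ?thesis
  proof (cases "C ! g")
    case (MulG h1 h2)
    show ?thesis
    proof (cases "t = 0")
      case True then show ?thesis using m MulG jk ab T1 by (auto simp: node_def)
    next
      case False
      have "b < a \<or> t = T - 1 \<or> (t - 1 = 0 \<and> j = idx h1 a b 0) \<or> (t - 1 = Suc (b - a) \<and> k = idx h2 a b 0)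
        \<or> (0 < t - 1 \<and> t - 1 < Suc (b - a) \<and> a \<le> b \<and> j = idx h1 a (a + (t - 1) - 1) (T - 1) \<and> k = idx h2 (a + (t - 1)) b (T - 1))"
        using m MulG False by (auto simp: node_def split: if_splits)
      then show ?thesis
      proof (elim disjE)
        assume "b < a" then show ?thesis using m MulG False by (auto simp: node_def)
      next
        assume "t = T - 1" then show ?thesis using m MulG False by (auto simp: node_def split: if_splits)
      next
        assume "t - 1 = 0 \<and> j = idx h1 a b 0" then show ?thesis using jk ab T1 by auto
      next
        assume "t - 1 = Suc (b - a) \<and> k = idx h2 a b 0" then show ?thesis using jk ab T1 by auto
      next
        assume c: "0 < t - 1 \<and> t - 1 < Suc (b - a) \<and> a \<le> b \<and> j = idx h1 a (a + (t - 1) - 1) (T - 1) \<and> k = idx h2 (a + (t - 1)) b (T - 1)"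
        then have "a + (t - 1) - 1 < D" "a + (t - 1) < D" using ab by auto
        moreover have "a \<le> a + (t - 1) - 1" "a + (t - 1) - 1 < a + (t - 1)" "a + (t - 1) \<le> b" using c by auto
        ultimately show ?thesis using c jk ab T1 by simp
      qed
    qed
  qed (use m in \<open>auto simp: node_def split: if_splits\<close>)
qed

lemma amd_C': "almost_MD C'"
  unfolding almost_MD_def
proof (intro allI impI)
  fix i j k assume i: "i < length C'" and m: "C' ! i = MulG j k"
  have iN: "i < N"
  proof (rule ccontr)
    assume "\<not> i < N" then have "i = N" using i by simp
    then show False using m by (simp add: C'_N outg_def)
  qed
  have "node (dg i) (da i) (db i) (dt i) = MulG j k" using m node_in_range[OF iN] by simp
  then have c: "(j < N \<and> dt j = 0) \<or> (k < N \<and> dt k = 0) \<or> (j < N \<and> k < N \<and> da j \<le> db j \<and> da k \<le> db k \<and> db j < da k)"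
    using mul_node node_in_range[OF iN] by blast
  show "subcirc C' j \<inter> subcirc C' k = {} \<or> const_producing C' j \<or> const_producing C' k"
  proof -
    { assume d: "j < N" "k < N" "da j \<le> db j" "da k \<le> db k" "db j < da k"
      have "subcirc C' j \<inter> subcirc C' k = {}"
      proof (rule ccontr)
        assume "subcirc C' j \<inter> subcirc C' k \<noteq> {}"
        then obtain u where "u \<in> subcirc C' j" "u \<in> subcirc C' k" by blast
        then show False using sub_tag[of u j] sub_tag[of u k] d by fastforce
      qed }
    then show ?thesis using c cp_K by blast
  qed
qed

lemma sum_list_bound: "(\<forall>x\<in>set xs. h x \<le> (B::nat)) \<Longrightarrow> sum_list (map h xs) \<le> length xs * B"
  by (induction xs) auto

lemma node_len: "g < length C \<Longrightarrow> b < D \<Longrightarrow> length (children (node g a b t)) \<le> circ_size C + D + 1"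
proof -
  assume g: "g < length C" and b: "b < D"
  have "length (children (C ! g)) \<le> (\<Sum>g\<leftarrow>C. length (children g))"
    using g by (intro member_le_sum_list) auto
  then have cl: "length (children (C ! g)) \<le> circ_size C" by (simp add: circ_size_def)
  show ?thesis using cl b by (cases "C ! g") (auto simp: node_def)
qed

lemma size_C': "circ_size C' \<le> Suc N + N * (circ_size C + D + 1) + D"
proof -
  have "(\<Sum>g\<leftarrow>C'. length (children g)) = (\<Sum>i\<leftarrow>[0..<N]. length (children (node (dg i) (da i) (db i) (dt i)))) + D"
    by (simp add: C'_def outg_def comp_def)
  also have "(\<Sum>i\<leftarrow>[0..<N]. length (children (node (dg i) (da i) (db i) (dt i)))) \<le> length [0..<N] * (circ_size C + D + 1)"
    using node_in_range node_len by (intro sum_list_bound) auto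
  finally show ?thesis by (simp add: circ_size_def)
qed

lemma N_bound: "N \<le> circ_size C * D * D * (D + 3)"
proof -
  have "length C \<le> circ_size C" by (simp add: circ_size_def)
  then show ?thesis by (simp add: N_def T_def)
qed

end

lemma pb_to: "poly_bounded g \<Longrightarrow> \<exists>c. \<forall>n. g n \<le> c * (n + 1) ^ c"
proof -
  assume "poly_bounded g"
  then obtain c where c: "\<forall>n. g n \<le> c * n ^ c + c" unfolding poly_bounded_def by blast
  have "g n \<le> (2 * c + 1) * (n + 1) ^ (2 * c + 1)" for n
  proof -
    have "n ^ c \<le> (n + 1) ^ c" by (intro power_mono) auto
    also have "\<dots> \<le> (n + 1) ^ (2 * c + 1)" by (intro power_increasing) auto
    finally have a: "n ^ c \<le> (n + 1) ^ (2 * c + 1)" .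
    have b: "1 \<le> (n + 1) ^ (2 * c + 1)" by (rule one_le_power) simp
    have "g n \<le> c * n ^ c + c * 1" using c by simp
    also have "\<dots> \<le> c * (n + 1) ^ (2 * c + 1) + c * (n + 1) ^ (2 * c + 1)"
      using a b by (intro add_mono mult_le_mono2) auto
    also have "\<dots> \<le> (2 * c + 1) * (n + 1) ^ (2 * c + 1)" by simp
    finally show ?thesis .
  qed
  then show ?thesis by blast
qed

lemma pb_from: "(\<And>n. g n \<le> A * (n + 1) ^ B) \<Longrightarrow> poly_bounded g"
proof -
  assume g: "\<And>n. g n \<le> A * (n + 1) ^ B"
  define C where "C = A * 2 ^ B + A + B"
  have "g n \<le> C * n ^ C + C" for n
  proof (cases "n = 0")
    case True
    then show ?thesis using g[of n] by (simp add: C_def)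
  next
    case False
    then have n1: "1 \<le> n" by simp
    have "(n + 1) ^ B \<le> (2 * n) ^ B" using n1 by (intro power_mono) auto
    also have "\<dots> = 2 ^ B * n ^ B" by (simp add: power_mult_distrib)
    also have "n ^ B \<le> n ^ C" using n1 by (intro power_increasing) (auto simp: C_def)
    finally have "(n + 1) ^ B \<le> 2 ^ B * n ^ C" by simp
    then have "A * (n + 1) ^ B \<le> A * 2 ^ B * n ^ C" by (metis mult.assoc mult_le_mono2)
    also have "\<dots> \<le> C * n ^ C" by (intro mult_le_mono1) (simp add: C_def)
    finally show ?thesis using g[of n] by simp
  qed
  then show ?thesis unfolding poly_bounded_def by blast
qed

definition G :: "nat \<Rightarrow> nat \<Rightarrow> nat" where
  "G S D = Suc (S * D * D * (D + 3)) + (S * D * D * (D + 3)) * (S + D + 1) + D"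

lemma G_mono: "S \<le> S' \<Longrightarrow> D \<le> D' \<Longrightarrow> G S D \<le> G S' D'"
proof -
  assume a: "S \<le> S'" "D \<le> D'"
  have M: "S * D * D * (D + 3) \<le> S' * D' * D' * (D' + 3)" using a by (intro mult_le_mono) auto
  show ?thesis unfolding G_def using a M by (intro add_mono Suc_le_mono mult_le_mono) auto
qed

lemma G_bound: "1 \<le> Q \<Longrightarrow> S \<le> Q \<Longrightarrow> D + 3 \<le> Q \<Longrightarrow> G S D \<le> 6 * Q ^ 5"
proof -
  assume q: "1 \<le> Q" "S \<le> Q" "D + 3 \<le> Q"
  have M: "S * D * D * (D + 3) \<le> Q * Q * Q * Q" using q by (intro mult_le_mono) auto
  have "G S D \<le> Suc (Q * Q * Q * Q) + (Q * Q * Q * Q) * (Q + Q + Q) + Q"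
    unfolding G_def using q M by (intro add_mono Suc_le_mono mult_le_mono) auto
  also have "\<dots> = 1 + Q ^ 4 + 3 * Q ^ 5 + Q" by (simp add: power_def algebra_simps eval_nat_numeral)
  also have "\<dots> \<le> Q ^ 5 + Q ^ 5 + 3 * Q ^ 5 + Q ^ 5"
  proof -
    have "1 \<le> Q ^ 5" using q by simp
    moreover have "Q ^ 4 \<le> Q ^ 5" using q by (intro power_increasing) auto
    moreover have "Q \<le> Q ^ 5" using q power_increasing[of 1 5 Q] by simp
    ultimately show ?thesis by linarith
  qed
  finally show ?thesis by simp
qed

lemma pb_G:
  assumes "poly_bounded s" "poly_bounded d"
  shows "poly_bounded (\<lambda>n. G (s n) (d n + 1))"
proof -
  obtain c1 where c1: "\<forall>n. s n \<le> c1 * (n + 1) ^ c1" using pb_to[OF assms(1)] by blast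
  obtain c2 where c2: "\<forall>n. d n \<le> c2 * (n + 1) ^ c2" using pb_to[OF assms(2)] by blast
  define c where "c = c1 + c2"
  have P: "c1 * (n + 1) ^ c1 \<le> c * (n + 1) ^ c" "c2 * (n + 1) ^ c2 \<le> c * (n + 1) ^ c" for n
    by (intro mult_le_mono power_increasing; simp add: c_def)+
  show ?thesis
  proof (rule pb_from)
    fix n
    define Q where "Q = c * (n + 1) ^ c + 4"
    have "G (s n) (d n + 1) \<le> 6 * Q ^ 5"
      using c1 c2 P[of n] by (intro G_bound) (auto simp: Q_def intro: order_trans)
    also have "Q \<le> (c + 4) * (n + 1) ^ c"
    proof -
      have "1 \<le> (n + 1) ^ c" by simp
      then show ?thesis by (simp add: Q_def algebra_simps)
    qed
    then have "Q ^ 5 \<le> ((c + 4) * (n + 1) ^ c) ^ 5" by (intro power_mono) auto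
    also have "\<dots> = (c + 4) ^ 5 * (n + 1) ^ (5 * c)" by (simp add: power_mult_distrib power_mult[symmetric] mult.commute)
    finally show "G (s n) (d n + 1) \<le> (6 * (c + 4) ^ 5) * (n + 1) ^ (5 * c)" by simp
  qed
qed


lemma cons_ok:
  assumes w: "wf_circuit n C" and cf: "constant_free C" and cp: "computes C p" and D: "total_deg p < D"
  shows "\<exists>C2. wf_circuit n C2 \<and> constant_free C2 \<and> almost_MD C2 \<and> computes C2 p \<and> circ_size C2 \<le> G (circ_size C) D"
proof -
  have ord: "\<forall>i<length C. \<forall>j\<in>set (children (C ! i)). j < i" and Cne: "C \<noteq> []"
    using w unfolding wf_circuit_def by auto
  interpret cons C D using ord Cne D by unfold_locales auto
  have lastC: "last (circ_vals C) = circ_vals C ! (length C - 1)"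
  proof -
    have "circ_vals C \<noteq> []" using Cne by (metis length_circ_vals length_0_conv)
    then show ?thesis by (simp add: last_conv_nth)
  qed
  have p: "circ_vals C ! (length C - 1) = p" using cp lastC by (simp add: computes_def)
  have "circ_size C' \<le> Suc N + N * (circ_size C + D + 1) + D" by (rule size_C')
  also have "\<dots> \<le> G (circ_size C) D"
    unfolding G_def using N_bound by (intro add_mono Suc_le_mono mult_le_mono) auto
  finally have sz: "circ_size C' \<le> G (circ_size C) D" .
  have "computes C' p" using out_val p D by (simp add: computes_def)
  then show ?thesis using wf_C'[OF w] cf_C'[OF cf] amd_C' sz by blast
qed

theorem lemma5p2:
  fixes f :: "nat \<Rightarrow> mpoly"
  assumes vars: "\<And>n. vars_in n (f n)"
    and deg: "poly_bounded (\<lambda>n. total_deg (f n))"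
    and circ: "\<exists>s. poly_bounded s \<and> (\<forall>n. \<exists>C. wf_circuit n C \<and> constant_free C
                   \<and> computes C (f n) \<and> circ_size C \<le> s n)"
  shows "\<exists>s. poly_bounded s \<and> (\<forall>n. \<exists>C. wf_circuit n C \<and> constant_free C \<and> almost_MD C
                   \<and> computes C (f n) \<and> circ_size C \<le> s n)"
proof -
  obtain s where s: "poly_bounded s" and hs: "\<forall>n. \<exists>C. wf_circuit n C \<and> constant_free C
                   \<and> computes C (f n) \<and> circ_size C \<le> s n" using circ by blast
  have "\<exists>C. wf_circuit n C \<and> constant_free C \<and> almost_MD C
                   \<and> computes C (f n) \<and> circ_size C \<le> G (s n) (total_deg (f n) + 1)" for n
  proof -
    obtain C where C: "wf_circuit n C" "constant_free C" "computes C (f n)" "circ_size C \<le> s n"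
      using hs by blast
    obtain C2 where C2: "wf_circuit n C2" "constant_free C2" "almost_MD C2" "computes C2 (f n)"
      "circ_size C2 \<le> G (circ_size C) (total_deg (f n) + 1)"
      using cons_ok[OF C(1-3), of "total_deg (f n) + 1"] by auto
    have "circ_size C2 \<le> G (s n) (total_deg (f n) + 1)"
      using le_trans[OF C2(5) G_mono[OF C(4) order_refl]] .
    then show ?thesis using C2 by blast
  qed
  moreover have "poly_bounded (\<lambda>n. G (s n) (total_deg (f n) + 1))"
    using pb_G[OF s deg] by simp
  ultimately show ?thesis by blast
qed

end
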